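(* \[m_{\mathbb{H}}\big((x-i)\ast(x-2i)\big)=m_{\mathbb{H}}(x^2-3xi-2)=\frac{9}{16}+\log 2.\]
   Context: $\mathbb{H}$ denotes the quaternions; $m_{\mathbb{H}}(P)=\int_{|x|=1}\log|P(x)|\,d\mu$ with $\mu$ the probability Haar measure on unit quaternions. The $\ast$-product of slice regular polynomials $\sum x^\ell a_\ell$ and $\sum x^\ell b_\ell$ is $\sum_n x^n\sum_{l=0}^n a_lb_{n-l}$ (coefficients on the right), so $(x-i)\ast(x-2i)=x^2-3xi-2$. *)

theory Defs
  imports "HOL-Analysis.Analysis"
begin

text \<open>Quaternions a + b i + c j + d k are represented as real 4-tuples (a,b,c,d);
  the product-type norm is the Euclidean norm, i.e. the quaternion modulus.\<close>

type_synonym quat = "real \<times> real \<times> real \<times> real"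

fun qmul :: "quat \<Rightarrow> quat \<Rightarrow> quat" where
  "qmul (a1, b1, c1, d1) (a2, b2, c2, d2) =
     (a1*a2 - b1*b2 - c1*c2 - d1*d2,
      a1*b2 + b1*a2 + c1*d2 - d1*c2,
      a1*c2 - b1*d2 + c1*a2 + d1*b2,
      a1*d2 + b1*c2 - c1*b2 + d1*a2)"

definition qone :: quat where "qone = (1, 0, 0, 0)"
definition qi :: quat where "qi = (0, 1, 0, 0)"
definition qreal :: "real \<Rightarrow> quat" where "qreal r = (r, 0, 0, 0)"

fun qpow :: "quat \<Rightarrow> nat \<Rightarrow> quat" where
  "qpow x 0 = qone"
| "qpow x (Suc n) = qmul (qpow x n) x"

text \<open>A slice regular polynomial \<Sum> x^l a_l (coefficients on the right) is given by its
  coefficient list [a_0, a_1, ..., a_n].\<close>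

definition qcoeff :: "quat list \<Rightarrow> nat \<Rightarrow> quat" where
  "qcoeff as l = (if l < length as then as ! l else 0)"

definition qeval :: "quat list \<Rightarrow> quat \<Rightarrow> quat" where
  "qeval as x = (\<Sum>l<length as. qmul (qpow x l) (as ! l))"

definition qstar :: "quat list \<Rightarrow> quat list \<Rightarrow> quat list" where
  "qstar as bs = map (\<lambda>n. \<Sum>l\<in>{0..n}. qmul (qcoeff as l) (qcoeff bs (n - l)))
                     [0..<length as + length bs - 1]"

text \<open>Normalized (probability) Haar measure on the unit quaternions S^3, realised as the
  normalized rotation-invariant surface measure on the unit sphere of R^4 (cone measure):
  push forward of the uniform distribution on the unit ball under radial projection.\<close>

definition haar_S3 :: "quat measure" where
  "haar_S3 = distr (uniform_measure lborel (ball 0 1)) borel (\<lambda>x. x /\<^sub>R norm x)"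

definition mH :: "quat list \<Rightarrow> real" where
  "mH P = (\<integral>x. ln (norm (qeval P x)) \<partial>haar_S3)"

end

theory Submission
  imports Defs "HOL-Real_Asymp.Real_Asymp"
begin

lemma qstar_eq: "qstar [- qi, qone] [- 2 *\<^sub>R qi, qone] = [- qreal 2, - 3 *\<^sub>R qi, qone]"
  by (simp add: qstar_def qcoeff_def qi_def qone_def qreal_def upt_rec zero_prod_def)

lemma norm_quat: "norm ((a,b,c,d)::quat) = sqrt (a^2+b^2+c^2+d^2)"
  by (simp add: norm_Pair power2_eq_square add.assoc)

lemma qeval_P: "qeval [- qreal 2, - 3 *\<^sub>R qi, qone] (a,b,c,d) =
   (a^2-b^2-c^2-d^2 + 3*b - 2, 2*a*b - 3*a, 2*a*c - 3*d, 2*a*d + 3*c)"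
  by (simp add: qeval_def qi_def qone_def qreal_def numeral_3_eq_3 lessThan_Suc power2_eq_square algebra_simps)

lemma normsq_P:
  assumes "a^2+b^2+c^2+d^2 = 1"
  shows "(norm (qeval [- qreal 2, - 3 *\<^sub>R qi, qone] (a,b,c,d)))^2 = 18 - 18*b - 8*a^2"
proof -
  have "c^2 + d^2 = 1 - a^2 - b^2" using assms by simp
  then show ?thesis unfolding qeval_P norm_quat
    by (simp add: power2_eq_square) (simp add: algebra_simps power2_eq_square, algebra)
qed

lemma cont_xlnx: "continuous_on {0..} (\<lambda>x::real. x * ln x)"
  unfolding continuous_on_def
proof (intro ballI)
  fix x :: real assume x: "x \<in> {0..}"
  show "((\<lambda>x. x * ln x) \<longlongrightarrow> x * ln x) (at x within {0..})"
  proof (cases "x = 0")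
    case True
    have "((\<lambda>x::real. x * ln x) \<longlongrightarrow> 0) (at_right 0)" by real_asymp
    then show ?thesis using True by (simp add: at_within_Ici_at_right)
  next
    case False
    then have "x > 0" using x by auto
    then have "isCont (\<lambda>x. x * ln x) x" by (intro continuous_intros) auto
    then show ?thesis
      unfolding isCont_def by (auto intro: tendsto_within_subset)
  qed
qed

lemma hi_scale_pos:
  fixes f :: "real \<Rightarrow> real"
  assumes "(f has_integral I) {m*a+c .. m*b+c}" "0 < m" "a \<le> b"
  shows "((\<lambda>x. f (m*x+c)) has_integral (I/m)) {a..b}"
proof -
  have "((\<lambda>x. f (m *\<^sub>R x + c)) has_integral (1 / (\<bar>m\<bar> ^ DIM(real))) *\<^sub>R I)
          ((\<lambda>x. (1 / m) *\<^sub>R x + -((1 / m) *\<^sub>R c)) ` cbox (m*a+c) (m*b+c))"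
    using has_integral_affinity[of f I "m*a+c" "m*b+c" m c] assms by auto
  moreover have "(\<lambda>x. (1 / m) *\<^sub>R x + -((1 / m) *\<^sub>R c)) ` cbox (m*a+c) (m*b+c) = {a..b}"
    using assms by (auto simp: image_affinity_cbox field_simps mult_left_mono)
  ultimately show ?thesis using assms by (simp add: field_simps)
qed

lemma hi_scale_neg:
  fixes f :: "real \<Rightarrow> real"
  assumes "(f has_integral I) {m*b+c .. m*a+c}" "m < 0" "a \<le> b"
  shows "((\<lambda>x. f (m*x+c)) has_integral (I/(-m))) {a..b}"
proof -
  have "((\<lambda>x. f (m *\<^sub>R x + c)) has_integral (1 / (\<bar>m\<bar> ^ DIM(real))) *\<^sub>R I)
          ((\<lambda>x. (1 / m) *\<^sub>R x + -((1 / m) *\<^sub>R c)) ` cbox (m*b+c) (m*a+c))"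
    using has_integral_affinity[of f I "m*b+c" "m*a+c" m c] assms by auto
  moreover have "(\<lambda>x. (1 / m) *\<^sub>R x + -((1 / m) *\<^sub>R c)) ` cbox (m*b+c) (m*a+c) = {a..b}"
    using assms by (auto simp: image_affinity_cbox field_simps mult_left_mono_neg)
  ultimately show ?thesis using assms by (simp add: field_simps)
qed

definition lf :: "real \<Rightarrow> real \<Rightarrow> real" where "lf t x = ln (1 - 2*t*cos x + t^2)"

lemma lf_refl:
  assumes "(lf t has_integral X) {0..pi}"
  shows "(lf (-t) has_integral X) {0..pi}"
proof -
  have "((\<lambda>x. lf t ((-1)*x+pi)) has_integral (X/(-(-1)))) {0..pi}"
    by (rule hi_scale_neg) (use assms in auto)
  moreover have "\<And>x. lf t ((-1)*x+pi) = lf (-t) x"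
    by (simp add: lf_def add.commute[of _ pi] diff_conv_add_uminus[symmetric])
  ultimately show ?thesis by simp
qed

lemma lf_pos: "0 < x \<Longrightarrow> x < pi \<Longrightarrow> 0 < 1 - 2*t*cos x + t^2"
proof -
  assume "0 < x" "x < pi"
  then have "sin x > 0" by (rule sin_gt_zero)
  have "1 - 2*t*cos x + t^2 = (t - cos x)^2 + (sin x)^2"
    by (simp add: power2_eq_square algebra_simps)
  then show ?thesis using \<open>sin x > 0\<close> by (smt (verit) zero_less_power2 zero_le_power2)
qed

lemma lf_double:
  assumes X: "(lf t has_integral X) {0..pi}" and Y: "(lf (t^2) has_integral Y) {0..pi}"
  shows "Y = 2*X"
proof -
  have 1: "((\<lambda>x. lf t x + lf (-t) x) has_integral (X + X)) {0..pi}"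
    using has_integral_add[OF X lf_refl[OF X]] .
  have 2: "((\<lambda>x. lf (t^2) (2*x)) has_integral (X+X)) {0..pi}"
  proof (rule has_integral_spike_finite[OF _ _ 1, of "{0,pi}"])
    fix x assume "x \<in> {0..pi} - {0,pi}"
    then have x: "0 < x" "x < pi" by auto
    have p1: "0 < 1 - 2*t*cos x + t^2" using lf_pos[OF x] .
    have p2: "0 < 1 - 2*(-t)*cos x + (-t)^2" using lf_pos[OF x] .
    have "lf t x + lf (-t) x = ln ((1 - 2*t*cos x + t^2) * (1 - 2*(-t)*cos x + (-t)^2))"
      unfolding lf_def using p1 p2 by (simp add: ln_mult)
    also have "(1 - 2*t*cos x + t^2) * (1 - 2*(-t)*cos x + (-t)^2) = 1 - 2*t^2*cos (2*x) + (t^2)^2"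
      unfolding cos_double_cos by (simp add: power2_eq_square algebra_simps)
    finally show "lf (t^2) (2*x) = lf t x + lf (-t) x" by (simp add: lf_def)
  qed auto
  have 3: "(lf (t^2) has_integral ((X+X)/(1/2))) {0..2*pi}"
    using hi_scale_pos[of "\<lambda>x. lf (t^2) (2*x)" "X+X" "1/2" 0 0 "2*pi"] 2 by simp
  have 4: "(lf (t^2) has_integral Y) {pi..2*pi}"
  proof -
    have "((\<lambda>x. lf (t^2) ((-1)*x+2*pi)) has_integral (Y/(-(-1)))) {pi..2*pi}"
      by (rule hi_scale_neg) (use Y in auto)
    moreover have "\<And>x. lf (t^2) ((-1)*x+2*pi) = lf (t^2) x"
      by (simp add: lf_def)
    ultimately show ?thesis by simp
  qed
  have 5: "(lf (t^2) has_integral (Y+Y)) {0..2*pi}"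
    by (rule has_integral_combine[OF _ _ Y 4]) auto
  from has_integral_unique[OF 3 5] show ?thesis by simp
qed

lemma lf_pos_gen: "\<bar>y::real\<bar> < 1 \<Longrightarrow> 0 < 1 - 2*y*cos x + y^2"
proof -
  assume y: "\<bar>y\<bar> < 1"
  have "\<bar>y * cos x\<bar> \<le> \<bar>y\<bar>" using abs_cos_le_one[of x] by (simp add: abs_mult mult_left_le)
  then have "1 - 2*y*cos x + y^2 \<ge> (1 - \<bar>y\<bar>)^2" by (simp add: power2_eq_square algebra_simps)
  moreover have "(1 - \<bar>y\<bar>)^2 > 0" using y by simp
  ultimately show ?thesis by linarith
qed

lemma lf_has_int: "\<bar>y\<bar> < 1 \<Longrightarrow> (lf y has_integral integral {0..pi} (lf y)) {0..pi}"
proof -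
  assume y: "\<bar>y\<bar> < 1"
  have "continuous_on {0..pi} (lf y)" unfolding lf_def
    using lf_pos_gen[OF y] by (intro continuous_intros) (auto simp: less_le)
  then show ?thesis using integrable_continuous_interval integrable_integral by blast
qed

definition XX :: "real \<Rightarrow> real" where "XX y = integral {0..pi} (lf y)"

lemma XX_sq: "\<bar>y\<bar> < 1 \<Longrightarrow> XX (y^2) = 2 * XX y"
proof -
  assume y: "\<bar>y\<bar> < 1"
  have "\<bar>y^2\<bar> < 1" using y by (simp add: abs_square_less_1)
  from lf_double[OF lf_has_int[OF y] lf_has_int[OF this]] show ?thesis by (simp add: XX_def)
qed

lemma XX_pow: "\<bar>y\<bar> < 1 \<Longrightarrow> XX (y^(2^k)) = 2^k * XX y"
proof (induction k)
  case 0 then show ?case by simp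
next
  case (Suc k)
  have "\<bar>y^(2^k)\<bar> < 1" using Suc.prems by (simp add: power_abs power_less_one_iff)
  have "y^(2^Suc k) = (y^(2^k))^2" by (simp add: power_mult[symmetric] mult.commute)
  then show ?case using XX_sq[OF \<open>\<bar>y^(2^k)\<bar> < 1\<close>] Suc by simp
qed

lemma XX_bound: "0 \<le> u \<Longrightarrow> u \<le> 1/2 \<Longrightarrow> \<bar>XX u\<bar> \<le> ln 4 * pi"
proof -
  assume u: "0 \<le> u" "u \<le> 1/2"
  have "\<bar>u\<bar> < 1" using u by simp
  have b: "norm (lf u x) \<le> ln 4" if "x \<in> cbox 0 pi" for x :: real
  proof -
    have "\<bar>u * cos x\<bar> \<le> u" using u abs_cos_le_one[of x] by (simp add: abs_mult mult_left_le)
    then have c: "-u \<le> u * cos x" "u * cos x \<le> u" by auto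
    have "(1/2)^2 \<le> (1-u)^2" by (rule power_mono) (use u in auto)
    moreover have "u^2 \<le> (1/2)^2" by (rule power_mono) (use u in auto)
    ultimately have l: "1/4 \<le> 1 - 2*u*cos x + u^2" and h: "1 - 2*u*cos x + u^2 \<le> 4"
      using c by (auto simp: power2_eq_square algebra_simps)
    have "ln (1/4) \<le> lf u x" unfolding lf_def using l by (subst ln_le_cancel_iff) auto
    moreover have "lf u x \<le> ln 4" unfolding lf_def using l h by (subst ln_le_cancel_iff) auto
    moreover have "ln (1/4::real) = - ln 4" by (simp add: ln_div)
    ultimately show ?thesis by simp
  qed
  have hi: "(lf u has_integral XX u) (cbox 0 pi)"
    using lf_has_int[OF \<open>\<bar>u\<bar> < 1\<close>] by (simp add: XX_def cbox_interval)
  have "norm (XX u) \<le> ln 4 * measure lborel (cbox 0 (pi::real))"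
    by (rule has_integral_bound[OF _ hi b]) simp_all
  then show ?thesis by simp
qed

lemma XX_half: "XX (1/2) = 0"
proof (rule ccontr)
  assume ne: "XX (1/2) \<noteq> 0"
  obtain k :: nat where k: "ln 4 * pi / \<bar>XX (1/2)\<bar> < 2^k"
    using real_arch_pow[of 2 "ln 4 * pi / \<bar>XX (1/2)\<bar>"] by auto
  have "(1/2::real)^(2^k) \<le> 1/2"
    using power_decreasing[of 1 "2^k" "1/2::real"] by simp
  then have "\<bar>XX ((1/2)^(2^k))\<bar> \<le> ln 4 * pi" by (intro XX_bound) auto
  then have "2^k * \<bar>XX (1/2)\<bar> \<le> ln 4 * pi" using XX_pow[of "1/2" k] by (simp add: abs_mult)
  then show False using k ne by (simp add: field_simps)
qed

lemma C2: "((\<lambda>x. ln (5 + 4 * cos x)) has_integral (2 * pi * ln 2)) {0..pi}"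
proof -
  have "\<bar>-(1/2)::real\<bar> < 1" by simp
  have h: "(lf (1/2) has_integral 0) {0..pi}" using lf_has_int[of "1/2"] XX_half by (simp add: XX_def)
  have "(lf (-(1/2)) has_integral 0) {0..pi}" by (rule lf_refl[OF h])
  then have "((\<lambda>x. ln 4 + lf (-(1/2)) x) has_integral (pi * ln 4 + 0)) {0..pi}"
    by (intro has_integral_add) (auto intro: has_integral_const_real[THEN has_integral_eq_rhs])
  moreover have "ln 4 + lf (-(1/2)) x = ln (5 + 4 * cos x)" for x
  proof -
    have p: "0 < 1 - 2*(-(1/2))*cos x + (-(1/2))^2" by (rule lf_pos_gen) simp
    have "ln 4 + lf (-(1/2)) x = ln (4 * (1 - 2*(-(1/2))*cos x + (-(1/2))^2))"
      unfolding lf_def using p by (subst ln_mult) auto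
    then show ?thesis by (simp add: algebra_simps power2_eq_square)
  qed
  moreover have "ln (4::real) = 2 * ln 2"
    using ln_realpow[of 2 2] by simp
  ultimately show ?thesis by (simp add: mult_ac)
qed

lemma sin_lower: "0 \<le> u \<Longrightarrow> u \<le> pi/2 \<Longrightarrow> u/2 \<le> sin u"
proof -
  assume u: "0 \<le> u" "u \<le> pi/2"
  have b: "\<bar>sin u - (\<Sum>m<3. sin_coeff m * u^m)\<bar> \<le> inverse (fact 3) * \<bar>u\<bar>^3"
    by (rule Maclaurin_sin_bound)
  have s: "(\<Sum>m<3. sin_coeff m * u^m) = u"
    by (simp add: sin_coeff_def numeral_3_eq_3 lessThan_Suc)
  have "u \<le> 1.6" using u pi_approx by simp
  then have "u^2 \<le> 1.6^2" using u by (intro power_mono) auto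
  then have "u*u \<le> 3" by (simp add: power2_eq_square)
  then have "u*u*u \<le> 3 * u" using u by (intro mult_right_mono) auto
  then have "u^3 \<le> 3 * u" by (simp add: power3_eq_cube)
  moreover have "fact 3 = (6::real)" by (simp add: eval_nat_numeral)
  then have "inverse (fact 3) * \<bar>u\<bar>^3 = u^3/6" using u by simp
  ultimately have "u - sin u \<le> u^3/6" using b s by (simp add: abs_le_iff)
  then show ?thesis using \<open>u^3 \<le> 3 * u\<close> by linarith
qed

lemma cos_lower: "0 \<le> x \<Longrightarrow> x \<le> pi \<Longrightarrow> x^2/4 \<le> 2 - 2*cos x"
proof -
  assume x: "0 \<le> x" "x \<le> pi"
  have c: "cos x = 1 - 2 * (sin (x/2))^2" using cos_double_sin[of "x/2"] by simp
  have "(x/2)/2 \<le> sin (x/2)" using sin_lower[of "x/2"] x by simp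
  then have "(x/4)^2 \<le> (sin (x/2))^2" using x by (intro power_mono) auto
  then show ?thesis unfolding c by (simp add: power2_eq_square)
qed

definition gb :: "real \<Rightarrow> real" where "gb x = 2*ln 4 + 4*ln pi - 2*ln x"

lemma gb_has_int: "(gb has_integral ((2*ln 4 + 4*ln pi + 2)*pi - 2*(pi*ln pi))) {0..pi}"
proof -
  let ?G = "\<lambda>x::real. (2*ln 4 + 4*ln pi + 2)*x - 2*(x*ln x)"
  have "(gb has_integral (?G pi - ?G 0)) {0..pi}"
  proof (rule fundamental_theorem_of_calculus_interior)
    show "continuous_on {0..pi} ?G"
      using continuous_on_subset[OF cont_xlnx, of "{0..pi}"]
      by (intro continuous_on_diff continuous_on_mult_left continuous_on_id) auto
    fix x assume "x \<in> {0<..<pi}"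
    then have "x > 0" by simp
    then have "(?G has_real_derivative (2*ln 4 + 4*ln pi + 2) - 2*(ln x + 1)) (at x)"
      by (auto intro!: derivative_eq_intros)
    then show "(?G has_vector_derivative gb x) (at x)"
      by (simp add: has_real_derivative_iff_has_vector_derivative[symmetric] gb_def algebra_simps)
  qed simp
  then show ?thesis by simp
qed

lemma gb_nonneg: "0 \<le> x \<Longrightarrow> x \<le> pi \<Longrightarrow> 0 \<le> gb x"
proof -
  assume x: "0 \<le> x" "x \<le> pi"
  have "ln x \<le> ln pi" using x pi_gt3 by (cases "x = 0") (auto simp: ln_le_cancel_iff)
  moreover have "0 < ln pi" using pi_gt3 by simp
  moreover have "0 < ln (4::real)" by simp
  ultimately show ?thesis unfolding gb_def by linarith
qed

lemma lf1_bound: "0 \<le> x \<Longrightarrow> x \<le> pi \<Longrightarrow> \<bar>lf 1 x\<bar> \<le> gb x"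
proof (cases "x = 0")
  case True then show ?thesis using gb_nonneg[of 0] by (simp add: lf_def)
next
  case False
  assume x: "0 \<le> x" "x \<le> pi"
  then have xp: "0 < x" using False by simp
  let ?A = "1 - 2*1*cos x + 1^2"
  have A: "?A = 2 - 2 * cos x" by simp
  have l: "x^2/4 \<le> ?A" using cos_lower[OF x] by simp
  have Ap: "0 < ?A" using l xp by (smt (verit) divide_pos_pos zero_less_power)
  have h: "?A \<le> 4" unfolding A using cos_ge_minus_one[of x] by linarith
  have "ln ?A \<le> ln 4" using h Ap by simp
  have "ln (x^2/4) \<le> ln ?A" using l xp Ap by (subst ln_le_cancel_iff) auto
  moreover have "ln (x^2/4) = 2 * ln x - ln 4" using xp by (simp add: ln_div ln_realpow)
  ultimately have lo: "2 * ln x - ln 4 \<le> ln ?A" by simp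
  have "ln x \<le> ln pi" using xp x by simp
  moreover have "0 < ln pi" using pi_gt3 by simp
  moreover have "0 < ln (4::real)" by simp
  ultimately have "\<bar>ln ?A\<bar> \<le> gb x" using lo \<open>ln ?A \<le> ln 4\<close> unfolding gb_def abs_le_iff by linarith
  then show ?thesis by (simp only: lf_def)
qed

lemma lf1_int: "lf 1 integrable_on {0..pi}"
proof -
  have gi: "gb integrable_on {0..pi}" using gb_has_int by blast
  have ga: "gb absolutely_integrable_on {0..pi}"
    by (rule nonnegative_absolutely_integrable_1[OF gi]) (auto intro: gb_nonneg)
  have meas: "lf 1 \<in> borel_measurable borel" unfolding lf_def by measurable
  have "set_integrable lebesgue {0..pi} (lf 1)"
  proof (rule set_integrable_bound[OF ga])
    show "set_borel_measurable lebesgue {0..pi} (lf 1)"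
    proof -
      have m2: "(\<lambda>x. indicat_real {0..pi} x *\<^sub>R lf 1 x) \<in> borel_measurable borel"
        by (intro borel_measurable_scaleR borel_measurable_indicator meas) auto
      show ?thesis unfolding set_borel_measurable_def
        using measurable_completion[of _ lborel borel] m2 by simp
    qed
    show "AE x in lebesgue. x \<in> {0..pi} \<longrightarrow> norm (lf 1 x) \<le> norm (gb x)"
      by (intro AE_I2 impI) (use lf1_bound gb_nonneg in auto)
  qed
  then show ?thesis using has_integral_set_lebesgue by blast
qed

lemma C1: "((\<lambda>x. ln (1 + cos x)) has_integral (- pi * ln 2)) {0..pi}"
proof -
  define X where "X = integral {0..pi} (lf 1)"
  have h: "(lf 1 has_integral X) {0..pi}" using lf1_int X_def by (simp add: integrable_integral)
  have "(lf (1^2) has_integral X) {0..pi}" using h by simp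
  from lf_double[OF h this] have "X = 0" by simp
  then have "(lf (-1) has_integral 0) {0..pi}" using lf_refl[OF h] by simp
  then have "((\<lambda>x. lf (-1) x - ln 2) has_integral (0 - pi * ln 2)) {0..pi}"
    by (intro has_integral_diff) (auto intro: has_integral_const_real[THEN has_integral_eq_rhs])
  then have hf: "((\<lambda>x. lf (-1) x - ln 2) has_integral (- pi * ln 2)) {0..pi}" by simp
  have eq: "ln (1 + cos x) = lf (-1) x - ln 2" if "x \<in> {0..pi} - {pi}" for x
  proof -
    from that have x: "0 \<le> x" "x < pi" by auto
    have "0 < cos (x/2)" by (rule cos_gt_zero_pi) (use x pi_gt3 in auto)
    moreover have "cos x = 2 * cos (x/2)^2 - 1" using cos_double_cos[of "x/2"] by simp
    ultimately have p: "0 < 1 + cos x" by simp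
    have "lf (-1) x = ln (2 * (1 + cos x))" unfolding lf_def by (simp add: algebra_simps)
    also have "\<dots> = ln 2 + ln (1 + cos x)" by (subst ln_mult) (use p in auto)
    finally show ?thesis by simp
  qed
  show ?thesis
    by (rule has_integral_spike_finite[of "{pi}", OF _ eq hf]) auto
qed

definition qq :: "real \<Rightarrow> real" where "qq c = 4*c^3 + 9*c^2 + 5*c"
definition rr :: "real \<Rightarrow> real" where "rr c = 4/3*c^2 + 9/2*c + 23/3"
definition QQ :: "real \<Rightarrow> real" where "QQ x = sin x * rr (cos x)"
definition R1 :: "real \<Rightarrow> real" where
  "R1 x = -(4/3)*(sin x - sin x^3/3) - (19/6)*(x/2 + sin x * cos x/2) - (19/6)* sin x + (23/3)*x"
definition AA :: "real \<Rightarrow> real" where "AA x = x/3 - (2/3)*arctan (sin x / (2 + cos x))"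
definition R2 :: "real \<Rightarrow> real" where
  "R2 x = -(4/3)*(sin x - sin x^3/3) - (17/6)*(x/2 + sin x * cos x/2) - (67/24)* sin x + (767/96)*x - (297/32) * AA x"

lemma sc: "sin (x::real) * sin x = 1 - cos x * cos x"
  using sin_squared_eq[of x] by (simp add: power2_eq_square)

lemma dQQ: "(QQ has_real_derivative (qq (cos x) - 9/2)) (at x)"
proof -
  have "(QQ has_real_derivative (cos x * rr (cos x) + sin x * ((8/3* cos x + 9/2) * (- sin x)))) (at x)"
    unfolding QQ_def rr_def by (auto intro!: derivative_eq_intros simp: power2_eq_square field_simps)
  moreover have "cos x * rr (cos x) + sin x * ((8/3* cos x + 9/2) * (- sin x)) = qq (cos x) - 9/2"
    unfolding rr_def qq_def using sc[of x] by algebra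
  ultimately show ?thesis by simp
qed

lemma dR1: "(R1 has_real_derivative ((1 - cos x) * rr (cos x))) (at x)"
proof -
  have "(R1 has_real_derivative (-(4/3)*(cos x - sin x^2 * cos x) - (19/6)*(1/2 + (cos x * cos x - sin x * sin x)/2) - (19/6) * cos x + 23/3)) (at x)"
    unfolding R1_def by (auto intro!: derivative_eq_intros simp: power2_eq_square field_simps)
  moreover have "-(4/3)*(cos x - sin x^2 * cos x) - (19/6)*(1/2 + (cos x * cos x - sin x * sin x)/2) - (19/6) * cos x + 23/3 = (1 - cos x) * rr (cos x)"
    unfolding rr_def using sc[of x] by algebra
  ultimately show ?thesis by simp
qed

lemma two_cos_pos: "0 < 2 + cos (x::real)"
  using cos_ge_minus_one[of x] by linarith

lemma five_cos_pos: "0 < 5 + 4 * cos (x::real)"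
  using cos_ge_minus_one[of x] by linarith

lemma dAA: "(AA has_real_derivative (1 / (5 + 4 * cos x))) (at x)"
proof -
  have p: "0 < 2 + cos x" by (rule two_cos_pos)
  have p5: "0 < 5 + 4 * cos x" by (rule five_cos_pos)
  let ?u' = "(cos x * (2 + cos x) - sin x * (0 + - sin x)) / ((2 + cos x) * (2 + cos x))"
  have du: "((\<lambda>x. sin x / (2 + cos x)) has_real_derivative ?u') (at x)"
    by (rule DERIV_divide[OF DERIV_sin DERIV_add[OF DERIV_const DERIV_cos]]) (use p in auto)
  have da: "((\<lambda>x. arctan (sin x / (2 + cos x))) has_real_derivative inverse (1 + (sin x / (2 + cos x))^2) * ?u') (at x)"
    by (rule DERIV_chain2[OF DERIV_arctan du])
  have d1: "((\<lambda>x. x / 3) has_real_derivative 1/3) (at x)"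
    by (auto intro!: derivative_eq_intros)
  have "(AA has_real_derivative (1/3 - (2/3) * (inverse (1 + (sin x / (2 + cos x))^2) * ?u'))) (at x)"
    unfolding AA_def by (rule DERIV_diff[OF d1 DERIV_cmult[OF da]])
  moreover have "1/3 - (2/3) * (inverse (1 + (sin x / (2 + cos x))^2) * ?u') = 1 / (5 + 4 * cos x)"
  proof -
    have e1: "1 + (sin x / (2 + cos x))^2 = (5 + 4 * cos x) / (2 + cos x)^2"
    proof -
      have d: "(2 + cos x)^2 + (sin x)^2 = 5 + 4 * cos x"
        using sc[of x] by algebra
      have "1 + (sin x / (2 + cos x))^2 = ((2 + cos x)^2 + (sin x)^2) / (2 + cos x)^2"
        using p by (simp add: power_divide field_simps)
      then show ?thesis using d by simp
    qed
    have e2: "cos x * (2 + cos x) - sin x * (0 + - sin x) = 1 + 2 * cos x" using sc[of x] by algebra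
    have e3: "inverse ((5 + 4 * cos x) / (2 + cos x)^2) * ((1 + 2 * cos x) / ((2 + cos x) * (2 + cos x))) = (1 + 2 * cos x) / (5 + 4 * cos x)"
    proof -
      have gen: "inverse (e / d^2) * (n / (d*d)) = n / e" if "d \<noteq> 0" "e \<noteq> 0" for d e n :: real
        using that by (simp add: field_simps power2_eq_square)
      show ?thesis using gen[of "2 + cos x" "5 + 4 * cos x" "1 + 2 * cos x"] p p5 by simp
    qed
    show ?thesis unfolding e1 e2 e3 using p5 by (simp add: field_simps)
  qed
  ultimately show ?thesis by simp
qed

lemma dR2: "(R2 has_real_derivative (4 * sin x * QQ x / (5 + 4 * cos x))) (at x)"
proof -
  let ?E = "-(4/3)*(cos x - sin x^2 * cos x) - (17/6)*(1/2 + (cos x * cos x - sin x * sin x)/2) - (67/24) * cos x + 767/96"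
  have "(R2 has_real_derivative (?E - (297/32) * (1 / (5 + 4 * cos x)))) (at x)"
    unfolding R2_def using five_cos_pos[of x] by (auto intro!: derivative_eq_intros dAA simp: power2_eq_square field_simps)
  moreover have "?E * (5 + 4 * cos x) - 297/32 = 4 * sin x * QQ x"
    unfolding QQ_def rr_def using sc[of x] by algebra
  then have "?E - (297/32) * (1 / (5 + 4 * cos x)) = 4 * sin x * QQ x / (5 + 4 * cos x)"
    using five_cos_pos[of x] by (simp add: field_simps)
  ultimately show ?thesis by simp
qed

lemma I2: "((\<lambda>x. (qq (cos x) - 9/2) * ln (5 + 4 * cos x)) has_integral (167 * pi / 48)) {0..pi}"
proof -
  let ?F = "\<lambda>x. QQ x * ln (5 + 4 * cos x) + R2 x"
  have hi: "((\<lambda>x. (qq (cos x) - 9/2) * ln (5 + 4 * cos x)) has_integral (?F pi - ?F 0)) {0..pi}"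
  proof (rule fundamental_theorem_of_calculus_interior)
    have dF: "(?F has_real_derivative (qq (cos x) - 9/2) * ln (5 + 4 * cos x)) (at x)" for x
    proof -
      have dL: "((\<lambda>x. ln (5 + 4 * cos x)) has_real_derivative (- 4 * sin x / (5 + 4 * cos x))) (at x)"
        using five_cos_pos[of x] by (auto intro!: derivative_eq_intros simp: field_simps)
      have "(?F has_real_derivative ((qq (cos x) - 9/2) * ln (5 + 4 * cos x) + (- 4 * sin x / (5 + 4 * cos x)) * QQ x + 4 * sin x * QQ x / (5 + 4 * cos x))) (at x)"
        by (rule DERIV_add[OF DERIV_mult[OF dQQ dL] dR2])
      then show ?thesis by (simp add: field_simps)
    qed
    show "continuous_on {0..pi} ?F"
      using dF by (intro continuous_at_imp_continuous_on ballI DERIV_isCont) auto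
    fix x assume "x \<in> {0<..<pi}"
    show "(?F has_vector_derivative (qq (cos x) - 9/2) * ln (5 + 4 * cos x)) (at x)"
      using dF[of x] by (simp add: has_real_derivative_iff_has_vector_derivative)
  qed simp
  have eq: "?F pi - ?F 0 = 167 * pi / 48"
    by (simp add: QQ_def R2_def AA_def)
  show ?thesis using hi unfolding eq .
qed

lemma cont_sqln: "continuous_on {0..} (\<lambda>y::real. sqrt y * ln y)"
  unfolding continuous_on_def
proof (intro ballI)
  fix x :: real assume x: "x \<in> {0..}"
  show "((\<lambda>x. sqrt x * ln x) \<longlongrightarrow> sqrt x * ln x) (at x within {0..})"
  proof (cases "x = 0")
    case True
    have "((\<lambda>x::real. sqrt x * ln x) \<longlongrightarrow> 0) (at_right 0)" by real_asymp
    then show ?thesis using True by (simp add: at_within_Ici_at_right)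
  next
    case False
    then have "x > 0" using x by auto
    then have "isCont (\<lambda>x. sqrt x * ln x) x" by (intro continuous_intros) auto
    then show ?thesis
      unfolding isCont_def by (auto intro: tendsto_within_subset)
  qed
qed

lemma onecos_pos: "0 \<le> x \<Longrightarrow> x < pi \<Longrightarrow> 0 < 1 + cos x"
proof -
  assume x: "0 \<le> x" "x < pi"
  have "0 < cos (x/2)" by (rule cos_gt_zero_pi) (use x pi_gt3 in auto)
  moreover have "cos x = 2 * cos (x/2)^2 - 1" using cos_double_cos[of "x/2"] by simp
  ultimately show ?thesis by simp
qed

lemma sin_ln_eq: "0 \<le> x \<Longrightarrow> x \<le> pi \<Longrightarrow> sin x * ln (1 + cos x) = sqrt (1 - cos x) * (sqrt (1 + cos x) * ln (1 + cos x))"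
proof -
  assume x: "0 \<le> x" "x \<le> pi"
  have "sin x \<ge> 0" using x by (simp add: sin_ge_zero)
  have "sin x = sqrt ((sin x)^2)" using \<open>sin x \<ge> 0\<close> by simp
  also have "(sin x)^2 = (1 - cos x) * (1 + cos x)" using sc[of x] by (simp add: power2_eq_square algebra_simps)
  finally have "sin x = sqrt (1 - cos x) * sqrt (1 + cos x)" by (simp add: real_sqrt_mult)
  then show ?thesis by simp
qed

lemma I1: "((\<lambda>x. (qq (cos x) - 9/2) * ln (1 + cos x)) has_integral (73 * pi / 12)) {0..pi}"
proof -
  let ?F = "\<lambda>x. QQ x * ln (1 + cos x) + R1 x"
  have hi: "((\<lambda>x. (qq (cos x) - 9/2) * ln (1 + cos x)) has_integral (?F pi - ?F 0)) {0..pi}"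
  proof (rule fundamental_theorem_of_calculus_interior)
    show "continuous_on {0..pi} ?F"
    proof -
      have c1: "continuous_on {0..pi} (\<lambda>x. sqrt (1 + cos x) * ln (1 + cos x))"
      proof -
        have "continuous_on {0..pi} (\<lambda>x. 1 + cos x)" by (intro continuous_intros)
        moreover have "(\<lambda>x. 1 + cos x) ` {0..pi} \<subseteq> {0..}" proof (clarsimp) fix y :: real show "0 \<le> 1 + cos y" using cos_ge_minus_one[of y] by linarith qed
        ultimately show ?thesis by (rule continuous_on_compose2[OF cont_sqln])
      qed
      have c0: "continuous_on {0..pi} (\<lambda>x. rr (cos x))" unfolding rr_def by (intro continuous_intros)
      have c3: "continuous_on {0..pi} (\<lambda>x. sqrt (1 - cos x))" by (intro continuous_intros)
      have c4: "continuous_on {0..pi} R1" unfolding R1_def by (intro continuous_intros) auto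
      have c2: "continuous_on {0..pi} (\<lambda>x. rr (cos x) * (sqrt (1 - cos x) * (sqrt (1 + cos x) * ln (1 + cos x))) + R1 x)"
        by (rule continuous_on_add[OF continuous_on_mult[OF c0 continuous_on_mult[OF c3 c1]] c4])
      show ?thesis
      proof (rule continuous_on_eq[OF c2])
        fix x assume "x \<in> {0..pi}"
        then have e: "sin x * ln (1 + cos x) = sqrt (1 - cos x) * (sqrt (1 + cos x) * ln (1 + cos x))"
          using sin_ln_eq[of x] by auto
        show "rr (cos x) * (sqrt (1 - cos x) * (sqrt (1 + cos x) * ln (1 + cos x))) + R1 x = ?F x"
          unfolding e[symmetric] QQ_def by (simp add: mult_ac)
      qed
    qed
    fix x assume x: "x \<in> {0<..<pi}"
    then have p: "0 < 1 + cos x" using onecos_pos[of x] by auto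
    have dL: "((\<lambda>x. ln (1 + cos x)) has_real_derivative (- sin x / (1 + cos x))) (at x)"
      using p by (auto intro!: derivative_eq_intros simp: field_simps)
    have "(?F has_real_derivative ((qq (cos x) - 9/2) * ln (1 + cos x) + (- sin x / (1 + cos x)) * QQ x + (1 - cos x) * rr (cos x))) (at x)"
      by (rule DERIV_add[OF DERIV_mult[OF dQQ dL] dR1])
    moreover have "QQ x * sin x = (1 - cos x) * rr (cos x) * (1 + cos x)"
      unfolding QQ_def using sc[of x] by algebra
    then have "(- sin x / (1 + cos x)) * QQ x + (1 - cos x) * rr (cos x) = 0"
      using p by (simp add: field_simps)
    ultimately show "(?F has_vector_derivative (qq (cos x) - 9/2) * ln (1 + cos x)) (at x)"
      by (simp add: has_real_derivative_iff_has_vector_derivative)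
  qed simp
  have eq: "?F pi - ?F 0 = 73 * pi / 12"
    by (simp add: QQ_def R1_def)
  show ?thesis using hi unfolding eq .
qed

definition WW :: "real \<Rightarrow> real" where
  "WW x = cos x * ((4 * (cos x)^2 + 9 * cos x + 5) * ln (4 * (cos x)^2 + 9 * cos x + 5))"

lemma W_int: "(WW has_integral (459 * pi / 48 + 9/2 * pi * ln 2)) {0..pi}"
proof -
  have h: "((\<lambda>x. ((qq (cos x) - 9/2) * ln (1 + cos x) + (qq (cos x) - 9/2) * ln (5 + 4 * cos x))
      + (9/2 * ln (1 + cos x) + 9/2 * ln (5 + 4 * cos x))) has_integral
      ((73 * pi / 12 + 167 * pi / 48) + (9/2 * (- pi * ln 2) + 9/2 * (2 * pi * ln 2)))) {0..pi}"
    by (intro has_integral_add I1 I2 has_integral_mult_right C1 C2)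
  have v: "(73 * pi / 12 + 167 * pi / 48) + (9/2 * (- pi * ln 2) + 9/2 * (2 * pi * ln 2)) = 459 * pi / 48 + 9/2 * pi * ln 2"
    by (simp add: field_simps)
  have eq: "WW x = ((qq (cos x) - 9/2) * ln (1 + cos x) + (qq (cos x) - 9/2) * ln (5 + 4 * cos x))
      + (9/2 * ln (1 + cos x) + 9/2 * ln (5 + 4 * cos x))" if "x \<in> {0..pi} - {pi}" for x
  proof -
    from that have x: "0 \<le> x" "x < pi" by auto
    have p1: "0 < 1 + cos x" by (rule onecos_pos[OF x])
    have p5: "0 < 5 + 4 * cos x" by (rule five_cos_pos)
    have "4 * (cos x)^2 + 9 * cos x + 5 = (1 + cos x) * (5 + 4 * cos x)" by (simp add: power2_eq_square algebra_simps)
    then have "ln (4 * (cos x)^2 + 9 * cos x + 5) = ln (1 + cos x) + ln (5 + 4 * cos x)"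
      using p1 p5 by (simp add: ln_mult)
    then show ?thesis unfolding WW_def qq_def by (simp add: algebra_simps power2_eq_square power3_eq_cube)
  qed
  show ?thesis
    by (rule has_integral_spike_finite[of "{pi}", OF _ eq h[unfolded v]]) auto
qed

definition pp :: "real \<Rightarrow> real" where "pp y = 4 * y^2 + 9 * y + 5"
definition LL :: "real \<Rightarrow> real" where "LL y = pp y * ln (pp y)"
definition K0 :: real where "K0 = 2 * ln 6 - ln 2 + 1"
definition innr :: "real \<Rightarrow> real" where
  "innr a = K0 * sqrt (1 - a^2) - (LL (sqrt (1 - a^2)) - LL (- sqrt (1 - a^2))) / 18"
definition hdk :: "real \<Rightarrow> real \<Rightarrow> real" where "hdk a b = ln 6 - ln (18 - 18 * b - 8 * a^2) / 2"

lemma pp_nonneg: "-1 \<le> y \<Longrightarrow> 0 \<le> pp y"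
proof -
  assume "-1 \<le> y"
  then have "0 \<le> (4 * y + 5) * (y + 1)" by simp
  then show ?thesis by (simp add: pp_def power2_eq_square algebra_simps)
qed

lemma cont_LL: "continuous_on S f \<Longrightarrow> (\<And>x. x \<in> S \<Longrightarrow> -1 \<le> f x) \<Longrightarrow> continuous_on S (\<lambda>x. LL (f x))"
proof -
  assume f: "continuous_on S f" and b: "\<And>x. x \<in> S \<Longrightarrow> -1 \<le> f x"
  have "continuous_on S (\<lambda>x. pp (f x))" unfolding pp_def by (intro continuous_intros f)
  moreover have "(\<lambda>x. pp (f x)) ` S \<subseteq> {0..}" using b pp_nonneg by auto
  ultimately have "continuous_on S (\<lambda>x. pp (f x) * ln (pp (f x)))"
    by (rule continuous_on_compose2[OF cont_xlnx])
  then show ?thesis by (simp add: LL_def)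
qed

lemma innr_b:
  assumes a: "\<bar>a\<bar> \<le> 1"
  shows "(hdk a has_integral innr a) {- sqrt (1 - a^2) .. sqrt (1 - a^2)}"
proof -
  define c where "c = sqrt (1 - a^2)"
  define M where "M = 9 - 4 * a^2"
  have c0: "0 \<le> c" unfolding c_def using a by (simp add: abs_square_le_1)
  have cc: "c^2 = 1 - a^2" unfolding c_def using a by (simp add: abs_square_le_1)
  have Lm: "M - 9 * c = pp (- c)" unfolding M_def pp_def using cc by (simp add: algebra_simps)
  have Lp: "M + 9 * c = pp c" unfolding M_def pp_def using cc by (simp add: algebra_simps)
  have c1: "c \<le> 1" unfolding c_def by simp
  have Lm0: "0 \<le> M - 9 * c" unfolding Lm using c1 by (intro pp_nonneg) simp
  define G where "G = (\<lambda>b. (ln 6 - ln 2 / 2) * b + ((M - 9 * b) * ln (M - 9 * b) - (M - 9 * b)) / 18)"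
  have hi: "((\<lambda>b. ln 6 - ln 2 / 2 - ln (M - 9 * b) / 2) has_integral (G c - G (-c))) {-c..c}"
  proof (rule fundamental_theorem_of_calculus_interior)
    show "- c \<le> c" using c0 by simp
    have cx: "continuous_on {-c..c} (\<lambda>b. (M - 9 * b) * ln (M - 9 * b))"
    proof -
      have "continuous_on {-c..c} (\<lambda>b. M - 9 * b)" by (intro continuous_intros)
      moreover have "(\<lambda>b. M - 9 * b) ` {-c..c} \<subseteq> {0..}" using Lm0 by auto
      ultimately show ?thesis by (rule continuous_on_compose2[OF cont_xlnx])
    qed
    have cl: "continuous_on {-c..c} (\<lambda>b. M - 9 * b)" by (intro continuous_intros)
    have cid: "continuous_on {-c..c} (\<lambda>b. (ln 6 - ln 2 / 2) * b)" by (intro continuous_intros)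
    show "continuous_on {-c..c} G" unfolding G_def
      by (intro continuous_on_add[OF cid] continuous_on_divide[OF continuous_on_diff[OF cx cl]] continuous_on_const) auto
    fix b assume b: "b \<in> {-c<..<c}"
    then have p: "0 < M - 9 * b" using Lm0 by auto
    have "(G has_real_derivative (ln 6 - ln 2 / 2) + ((-9) * ln (M - 9 * b) + (M - 9 * b) * ((-9) / (M - 9 * b)) - (-9)) / 18) (at b)"
      unfolding G_def using p by (auto intro!: derivative_eq_intros)
    moreover have "(ln 6 - ln 2 / 2) + ((-9) * ln (M - 9 * b) + (M - 9 * b) * ((-9) / (M - 9 * b)) - (-9)) / 18
        = ln 6 - ln 2 / 2 - ln (M - 9 * b) / 2" using p by (simp add: field_simps)
    ultimately show "(G has_vector_derivative (ln 6 - ln 2 / 2 - ln (M - 9 * b) / 2)) (at b)"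
      by (simp add: has_real_derivative_iff_has_vector_derivative)
  qed
  have val: "G c - G (-c) = innr a"
  proof -
    have "G c - G (-c) = (2 * ln 6 - ln 2) * c + (pp (-c) * ln (pp (-c)) - pp c * ln (pp c)) / 18 + (pp c - pp (-c)) / 18"
      unfolding G_def Lm[symmetric] by (simp add: Lp[symmetric] field_simps)
    also have "pp c - pp (-c) = 18 * c" by (simp add: pp_def)
    finally show ?thesis unfolding innr_def c_def[symmetric] K0_def LL_def by (simp add: field_simps)
  qed
  have eq: "hdk a b = ln 6 - ln 2 / 2 - ln (M - 9 * b) / 2" if "b \<in> {-c..c} - {c}" for b
  proof -
    from that have p: "0 < M - 9 * b" using Lm0 by auto
    have e: "18 - 18 * b - 8 * a^2 = 2 * (M - 9 * b)" unfolding M_def by simp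
    have "ln (18 - 18 * b - 8 * a^2) = ln 2 + ln (M - 9 * b)" unfolding e using p by (subst ln_mult) auto
    then show ?thesis unfolding hdk_def by (simp add: field_simps)
  qed
  show ?thesis
    using has_integral_spike_finite[of "{c}", OF _ eq hi] val unfolding c_def[symmetric] by simp
qed

definition TT :: real where "TT = 459 * pi / 48 + 9/2 * pi * ln 2"

lemma innr_cont: "continuous_on {-1..1} innr"
proof -
  have s: "continuous_on {-1..1} (\<lambda>a::real. sqrt (1 - a^2))" by (intro continuous_intros)
  have ns: "continuous_on {-1..1} (\<lambda>a::real. - sqrt (1 - a^2))" by (intro continuous_intros)
  have l1: "continuous_on {-1..1} (\<lambda>a. LL (sqrt (1 - a^2)))"
  proof (rule cont_LL[OF s])
    fix x :: real assume "x \<in> {-1..1}"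
    then have "x^2 \<le> 1" by (simp add: abs_square_le_1 abs_le_iff)
    then have "0 \<le> sqrt (1 - x^2)" by simp
    then show "-1 \<le> sqrt (1 - x^2)" by linarith
  qed
  have l2: "continuous_on {-1..1} (\<lambda>a. LL (- sqrt (1 - a^2)))"
  proof (rule cont_LL[OF ns])
    fix x :: real assume "x \<in> {-1..1}"
    have "sqrt (1 - x^2) \<le> 1" by simp
    then show "-1 \<le> - sqrt (1 - x^2)" by simp
  qed
  have d: "continuous_on {-1..1} (\<lambda>a. (LL (sqrt (1 - a^2)) - LL (- sqrt (1 - a^2))) / 18)"
    by (rule continuous_on_divide[OF continuous_on_diff[OF l1 l2] continuous_on_const]) simp
  show ?thesis unfolding innr_def
    by (rule continuous_on_diff[OF continuous_on_mult_left[OF s] d])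
qed

lemma cos2_int: "((\<lambda>x. cos x * cos x) has_integral (pi/4)) {0..pi/2}"
proof -
  let ?G = "\<lambda>x::real. x/2 + sin x * cos x / 2"
  have "((\<lambda>x. cos x * cos x) has_integral (?G (pi/2) - ?G 0)) {0..pi/2}"
  proof (rule fundamental_theorem_of_calculus)
    show "0 \<le> pi/2" by simp
    fix x assume "x \<in> {0..pi/2}"
    have "(?G has_real_derivative (1/2 + (cos x * cos x - sin x * sin x) / 2)) (at x within {0..pi/2})"
      by (auto intro!: derivative_eq_intros simp: field_simps)
    moreover have "1/2 + (cos x * cos x - sin x * sin x) / 2 = cos x * cos x" using sc[of x] by (simp add: field_simps)
    ultimately show "(?G has_vector_derivative cos x * cos x) (at x within {0..pi/2})"
      by (simp add: has_real_derivative_iff_has_vector_derivative)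
  qed
  then show ?thesis by simp
qed

lemma WW_half: "((\<lambda>x. WW x + WW (pi - x)) has_integral TT) {0..pi/2}"
proof -
  have W: "(WW has_integral TT) {0..pi}" using W_int unfolding TT_def .
  have i1: "WW integrable_on {0..pi/2}" by (rule integrable_subinterval_real[OF has_integral_integrable[OF W]]) auto
  have i2: "WW integrable_on {pi/2..pi}" by (rule integrable_subinterval_real[OF has_integral_integrable[OF W]]) auto
  define I1 where "I1 = integral {0..pi/2} WW"
  define I2 where "I2 = integral {pi/2..pi} WW"
  have h1: "(WW has_integral I1) {0..pi/2}" using i1 I1_def by (simp add: has_integral_integral)
  have h2: "(WW has_integral I2) {pi/2..pi}" using i2 I2_def by (simp add: has_integral_integral)
  have "(WW has_integral (I1 + I2)) {0..pi}" by (rule has_integral_combine[OF _ _ h1 h2]) auto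
  then have s: "I1 + I2 = TT" using W has_integral_unique by blast
  have "((\<lambda>x. WW ((-1) * x + pi)) has_integral (I2 / (-(-1)))) {0..pi/2}"
    by (rule hi_scale_neg) (use h2 in auto)
  then have h3: "((\<lambda>x. WW (pi - x)) has_integral I2) {0..pi/2}" by simp
  show ?thesis using has_integral_add[OF h1 h3] s by simp
qed

lemma sub_eq: "x \<in> {0..pi/2} \<Longrightarrow> cos x * innr (sin x) = K0 * (cos x * cos x) - (WW x + WW (pi - x)) / 18"
proof -
  assume x: "x \<in> {0..pi/2}"
  then have c: "0 \<le> cos x" by (intro cos_ge_zero) auto
  have "sqrt (1 - (sin x)^2) = cos x" using c by (simp add: cos_squared_eq[symmetric])
  moreover have "WW x = cos x * LL (cos x)" by (simp add: WW_def LL_def pp_def)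
  moreover have "WW (pi - x) = - cos x * LL (- cos x)" by (simp add: WW_def LL_def pp_def)
  ultimately show ?thesis unfolding innr_def by (simp add: field_simps)
qed

lemma innr_01: "(innr has_integral (K0 * (pi/4) - TT/18)) {0..1}"
proof -
  have hs: "((\<lambda>x. cos x * innr (sin x)) has_integral (K0 * (pi/4) - TT/18)) {0..pi/2}"
  proof -
    have hh: "((\<lambda>x. K0 * (cos x * cos x) - (WW x + WW (pi - x)) / 18) has_integral (K0 * (pi/4) - TT/18)) {0..pi/2}"
      by (intro has_integral_diff has_integral_mult_right has_integral_divide cos2_int WW_half)
    show ?thesis
      by (rule has_integral_spike_finite[OF _ _ hh, of "{}"]) (simp_all add: sub_eq)
  qed
  have ci: "continuous_on {0..1} innr" by (rule continuous_on_subset[OF innr_cont]) auto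
  have "((\<lambda>x. cos x *\<^sub>R innr (sin x)) has_integral (integral {sin 0..sin (pi/2)} innr)) {0..pi/2}"
  proof (rule has_integral_substitution[where c=0 and d=1])
    show "sin ` {0..pi/2} \<subseteq> {0..1}"
    proof
      fix y assume "y \<in> sin ` {0..pi/2}"
      then obtain x where x: "0 \<le> x" "x \<le> pi/2" "y = sin x" by auto
      have "0 \<le> sin x" using x by (intro sin_ge_zero) auto
      then show "y \<in> {0..1}" using x sin_le_one[of x] by auto
    qed
    show "(sin has_real_derivative cos x) (at x within {0..pi/2})" for x
      by (auto intro!: derivative_eq_intros)
  qed (auto intro: ci)
  then have "((\<lambda>x. cos x * innr (sin x)) has_integral (integral {0..1} innr)) {0..pi/2}" by simp
  then have "integral {0..1} innr = K0 * (pi/4) - TT/18" by (rule has_integral_unique[OF _ hs])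
  then show ?thesis using integrable_continuous_interval[OF ci] has_integral_integral by metis
qed

lemma innr_total: "(innr has_integral (pi * (ln 3 - 9/16))) {-1..1}"
proof -
  let ?J = "K0 * (pi/4) - TT/18"
  have "((\<lambda>x. innr ((-1) * x + 0)) has_integral (?J / (-(-1)))) {-1..0}"
    by (rule hi_scale_neg) (use innr_01 in auto)
  moreover have "innr ((-1) * x + 0) = innr x" for x unfolding innr_def by simp
  ultimately have h1: "(innr has_integral ?J) {-1..0}" by simp
  have "(innr has_integral (?J + ?J)) {-1..1}" by (rule has_integral_combine[OF _ _ h1 innr_01]) auto
  moreover have "?J + ?J = pi * (ln 3 - 9/16)"
  proof -
    have "ln (6::real) = ln 2 + ln 3" using ln_mult[of 2 3] by simp
    then show ?thesis unfolding K0_def TT_def by (simp add: field_simps)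
  qed
  ultimately show ?thesis by simp
qed

lemma sets_borel_atMost: "sets (borel :: real measure) = sigma_sets UNIV (range atMost)"
  by (subst borel_eq_atMost) (simp add: sets_measure_of)

lemma emeasure_nsq_atMost:
  "emeasure (lborel :: (real \<times> real) measure) {v. norm v ^ 2 \<le> x} = ennreal (pi * max x 0)"
proof (cases "x < 0")
  case True
  then have e: "{v::real\<times>real. norm v ^ 2 \<le> x} = {}"
  proof -
    have "\<not> norm v ^ 2 \<le> x" for v :: "real \<times> real"
      using True zero_le_power2[of "norm v"] by linarith
    then show ?thesis by auto
  qed
  show ?thesis unfolding e using True by simp
next
  case False
  then have x: "0 \<le> x" by simp
  have iff: "norm v ^ 2 \<le> x \<longleftrightarrow> norm v \<le> sqrt x" for v :: "real \<times> real"
  proof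
    assume "norm v ^ 2 \<le> x" then show "norm v \<le> sqrt x" by (rule real_le_rsqrt)
  next
    assume "norm v \<le> sqrt x"
    then have "norm v ^ 2 \<le> sqrt x ^ 2" by (intro power_mono) auto
    then show "norm v ^ 2 \<le> x" using x by simp
  qed
  have "{v::real\<times>real. norm v ^ 2 \<le> x} = cball 0 (sqrt x)"
    unfolding iff cball_def by (simp add: dist_norm norm_minus_commute[of 0])
  moreover have "emeasure lborel (cball (0::real\<times>real) (sqrt x)) = ennreal (unit_ball_vol 2 * sqrt x ^ 2)"
    using emeasure_cball[of "sqrt x" "0::real\<times>real"] x by simp
  ultimately show ?thesis using x by (simp add: unit_ball_vol_2)
qed

lemma radial_distr:
  "distr (lborel :: (real \<times> real) measure) borel (\<lambda>v. norm v ^ 2) = density lborel (\<lambda>t. ennreal pi * indicator {0..} t)"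
  (is "?M = ?N")
proof (rule measure_eqI_generator_eq_countable[where E = "range atMost" and \<Omega> = UNIV and A = "range (\<lambda>n::nat. {..real n})"])
  show "Int_stable (range (atMost :: real \<Rightarrow> real set))"
    by (auto simp: Int_stable_def)
  show "range atMost \<subseteq> Pow (UNIV :: real set)" by simp
  have eqM: "emeasure ?M {..x} = ennreal (pi * max x 0)" for x
    by (subst emeasure_distr) (auto simp: emeasure_nsq_atMost vimage_def)
  have eqN: "emeasure ?N {..x} = ennreal (pi * max x 0)" for x :: real
  proof -
    have "emeasure ?N {..x} = (\<integral>\<^sup>+ t. ennreal pi * indicator {0..} t * indicator {..x} t \<partial>lborel)"
      by (subst emeasure_density) auto
    also have "\<dots> = (\<integral>\<^sup>+ t. ennreal pi * indicator {0..x} t \<partial>lborel)"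
      by (intro nn_integral_cong) (auto split: split_indicator)
    also have "\<dots> = ennreal pi * emeasure lborel {0..x}"
      by (subst nn_integral_cmult_indicator) auto
    also have "\<dots> = ennreal (pi * max x 0)"
      by (cases "0 \<le> x") (auto simp: ennreal_mult)
    finally show ?thesis .
  qed
  show "emeasure ?M X = emeasure ?N X" if "X \<in> range atMost" for X
    using that eqM eqN by auto
  show "sets ?M = sigma_sets UNIV (range atMost)" by (simp add: sets_borel_atMost)
  show "sets ?N = sigma_sets UNIV (range atMost)" by (simp add: sets_borel_atMost)
  show "range (\<lambda>n::nat. {..real n}) \<subseteq> range atMost" by auto
  show "\<Union> (range (\<lambda>n::nat. {..real n})) = UNIV"
    by (auto simp: real_arch_simple)
  show "countable (range (\<lambda>n::nat. {..real n}))" by simp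
  show "emeasure ?M a \<noteq> \<infinity>" if "a \<in> range (\<lambda>n::nat. {..real n})" for a
    using that eqM by auto
qed

lemma radial:
  fixes \<phi> :: "real \<Rightarrow> ennreal"
  assumes [measurable]: "\<phi> \<in> borel_measurable borel"
  shows "(\<integral>\<^sup>+ v. \<phi> (norm v ^ 2) \<partial>(lborel :: (real \<times> real) measure)) = ennreal pi * (\<integral>\<^sup>+ t. indicator {0..} t * \<phi> t \<partial>lborel)"
proof -
  have "(\<integral>\<^sup>+ v. \<phi> (norm v ^ 2) \<partial>(lborel :: (real \<times> real) measure)) = (\<integral>\<^sup>+ t. \<phi> t \<partial>distr (lborel :: (real \<times> real) measure) borel (\<lambda>v. norm v ^ 2))"
    by (subst nn_integral_distr) auto
  also have "\<dots> = (\<integral>\<^sup>+ t. \<phi> t \<partial>density lborel (\<lambda>t. ennreal pi * indicator {0..} t))"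
    by (simp add: radial_distr)
  also have "\<dots> = (\<integral>\<^sup>+ t. ennreal pi * indicator {0..} t * \<phi> t \<partial>lborel)"
    by (subst nn_integral_density) auto
  also have "\<dots> = ennreal pi * (\<integral>\<^sup>+ t. indicator {0..} t * \<phi> t \<partial>lborel)"
    by (subst nn_integral_cmult[symmetric]) (auto simp: mult.assoc)
  finally show ?thesis .
qed

lemma scale2:
  fixes f :: "real \<times> real \<Rightarrow> ennreal"
  assumes [measurable]: "f \<in> borel_measurable borel" and c: "c > 0"
  shows "(\<integral>\<^sup>+ u. f u \<partial>lborel) = ennreal (c^2) * (\<integral>\<^sup>+ z. f (c *\<^sub>R z) \<partial>lborel)"
proof -
  have "(\<integral>\<^sup>+ u. f u \<partial>lborel) = (\<integral>\<^sup>+ u. f u \<partial>density (distr lborel borel (\<lambda>x. 0 + c *\<^sub>R x)) (\<lambda>_. \<bar>c\<bar>^DIM(real\<times>real)))"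
    using lborel_affine[of c "0::real\<times>real"] c by simp
  also have "\<dots> = (\<integral>\<^sup>+ z. ennreal (c^2) * f (c *\<^sub>R z) \<partial>lborel)"
    using c by (subst nn_integral_density) (auto simp: nn_integral_distr power2_eq_square)
  also have "\<dots> = ennreal (c^2) * (\<integral>\<^sup>+ z. f (c *\<^sub>R z) \<partial>lborel)"
    by (subst nn_integral_cmult) auto
  finally show ?thesis .
qed

lemma split4:
  fixes F :: "real \<times> real \<times> ('c::euclidean_space) \<Rightarrow> ennreal"
  assumes [measurable]: "F \<in> borel_measurable borel"
  shows "(\<integral>\<^sup>+ x. F x \<partial>lborel) = (\<integral>\<^sup>+ u. (\<integral>\<^sup>+ v. F (fst u, snd u, v) \<partial>lborel) \<partial>lborel)"
proof -
  have e1: "(\<integral>\<^sup>+ x. G x \<partial>lborel) = (\<integral>\<^sup>+ a. (\<integral>\<^sup>+ y. G (a, y) \<partial>lborel) \<partial>lborel)"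
    if [measurable]: "G \<in> borel_measurable borel" for G :: "('a::euclidean_space) \<times> ('b::euclidean_space) \<Rightarrow> ennreal"
  proof -
    have "(\<integral>\<^sup>+ x. G x \<partial>lborel) = integral\<^sup>N (lborel \<Otimes>\<^sub>M lborel) G" by (simp add: lborel_prod)
    also have "\<dots> = (\<integral>\<^sup>+ a. (\<integral>\<^sup>+ y. G (a, y) \<partial>lborel) \<partial>lborel)"
      by (rule lborel.nn_integral_fst[symmetric]) (simp add: lborel_prod)
    finally show ?thesis .
  qed
  have "(\<integral>\<^sup>+ x. F x \<partial>lborel) = (\<integral>\<^sup>+ a. (\<integral>\<^sup>+ y. F (a, y) \<partial>lborel) \<partial>lborel)"
    by (rule e1) simp
  also have "\<dots> = (\<integral>\<^sup>+ a. (\<integral>\<^sup>+ b. (\<integral>\<^sup>+ v. F (a, b, v) \<partial>lborel) \<partial>lborel) \<partial>lborel)"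
    by (intro nn_integral_cong e1) simp
  also have "\<dots> = (\<integral>\<^sup>+ u. (\<integral>\<^sup>+ v. F (fst u, snd u, v) \<partial>lborel) \<partial>lborel)"
  proof -
    have m1: "(\<lambda>p::(real\<times>real)\<times>'c. (fst (fst p), snd (fst p), snd p)) \<in> borel \<rightarrow>\<^sub>M borel"
      by (intro borel_measurable_continuous_onI continuous_intros)
    have m2: "(\<lambda>p::(real\<times>real)\<times>'c. F (fst (fst p), snd (fst p), snd p)) \<in> borel_measurable (lborel \<Otimes>\<^sub>M lborel)"
      unfolding lborel_prod using measurable_comp[OF m1, of F borel] by (simp add: comp_def)
    have [measurable]: "(\<lambda>u. \<integral>\<^sup>+ v. F (fst u, snd u, v) \<partial>lborel) \<in> borel_measurable borel"
      using lborel.borel_measurable_nn_integral_fst[OF m2] by simp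
    show ?thesis using e1[of "\<lambda>u. \<integral>\<^sup>+ v. F (fst u, snd u, v) \<partial>lborel"] by simp
  qed
  finally show ?thesis .
qed

lemma norm_quat_sq: "norm ((a, b, v) :: real \<times> real \<times> (real \<times> real)) ^ 2 = a^2 + b^2 + norm v ^ 2"
  by (simp add: norm_Pair)

lemma norm_pair_sq: "norm (u :: real \<times> real) ^ 2 = fst u ^ 2 + snd u ^ 2"
  by (cases u) (simp add: norm_Pair)

lemma fst_quat_meas[measurable]: "(\<lambda>x::quat. fst x) \<in> borel \<rightarrow>\<^sub>M borel"
  by (intro borel_measurable_continuous_onI continuous_intros)
lemma fst_snd_quat_meas[measurable]: "(\<lambda>x::quat. fst (snd x)) \<in> borel \<rightarrow>\<^sub>M borel"
  by (intro borel_measurable_continuous_onI continuous_intros)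
lemma fst_pair_meas[measurable]: "(\<lambda>x::real\<times>real. fst x) \<in> borel \<rightarrow>\<^sub>M borel"
  by (intro borel_measurable_continuous_onI continuous_intros)
lemma snd_pair_meas[measurable]: "(\<lambda>x::real\<times>real. snd x) \<in> borel \<rightarrow>\<^sub>M borel"
  by (intro borel_measurable_continuous_onI continuous_intros)

lemma int_id_01: "(\<integral>\<^sup>+ w. ennreal w * indicator {0<..<1} w \<partial>lborel) = ennreal (1/2)"
proof -
  have "((\<lambda>w::real. w) has_integral (1^2/2 - 0^2/2)) {0..1}"
    by (rule fundamental_theorem_of_calculus) (auto intro!: derivative_eq_intros simp: has_real_derivative_iff_has_vector_derivative[symmetric])
  then have "((\<lambda>w::real. w) has_integral (1/2)) {0<..<1}"
    using has_integral_open_interval[of "\<lambda>w::real. w" "1/2" 0 1] by simp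
  then show ?thesis by (rule nn_integral_has_integral_lebesgue'[rotated]) auto
qed

lemma reduction:
  fixes h :: "real \<times> real \<Rightarrow> ennreal"
  assumes hm[measurable]: "h \<in> borel_measurable borel"
  shows "(\<integral>\<^sup>+ x. indicator (ball 0 1) x * h (fst x / norm x, fst (snd x) / norm x) \<partial>(lborel :: quat measure))
         = ennreal (pi/2) * (\<integral>\<^sup>+ z. indicator (cball 0 1) z * h z \<partial>lborel)"
proof -
  define K where "K = (\<integral>\<^sup>+ z. indicator (cball 0 1) z * h z \<partial>lborel)"
  define F where "F = (\<lambda>x::quat. if norm x < 1 then h (fst x / norm x, fst (snd x) / norm x) else 0)"
  define \<phi> where "\<phi> = (\<lambda>(u::real\<times>real) t. if norm u ^ 2 + t < 1 then h (fst u / sqrt (norm u ^ 2 + t), snd u / sqrt (norm u ^ 2 + t)) else 0)"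
  define \<Psi> where "\<Psi> = (\<lambda>(u::real\<times>real) w. if norm u ^ 2 \<le> w \<and> w < 1 then h (fst u / sqrt w, snd u / sqrt w) else 0)"
  have Fm[measurable]: "F \<in> borel_measurable borel" unfolding F_def by measurable
  have \<phi>m[measurable]: "\<phi> u \<in> borel_measurable borel" for u unfolding \<phi>_def by measurable
  have \<Psi>m: "case_prod \<Psi> \<in> borel_measurable (lborel \<Otimes>\<^sub>M lborel)" unfolding \<Psi>_def by measurable
  have \<Psi>m1[measurable]: "(\<lambda>u. \<Psi> u w) \<in> borel_measurable borel" for w unfolding \<Psi>_def by measurable
  have \<Psi>m2[measurable]: "(\<lambda>w. \<Psi> u w) \<in> borel_measurable borel" for u unfolding \<Psi>_def by measurable
  have inner_eq: "(\<integral>\<^sup>+ t. indicator {0..} t * \<phi> u t \<partial>lborel) = (\<integral>\<^sup>+ w. \<Psi> u w \<partial>lborel)" for u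
  proof -
    let ?s = "norm u ^ 2"
    have m: "(\<lambda>t. indicator {0..} t * \<phi> u t) \<in> borel_measurable borel" by measurable
    have "(\<integral>\<^sup>+ t. indicator {0..} t * \<phi> u t \<partial>lborel) = (\<integral>\<^sup>+ w. indicator {0..} (- ?s + 1 * w) * \<phi> u (- ?s + 1 * w) \<partial>lborel)"
      using nn_integral_real_affine[OF m, of 1 "- ?s"] by simp
    also have "\<dots> = (\<integral>\<^sup>+ w. \<Psi> u w \<partial>lborel)"
      by (intro nn_integral_cong) (auto simp: \<phi>_def \<Psi>_def split: split_indicator)
    finally show ?thesis .
  qed
  have "(\<integral>\<^sup>+ x. indicator (ball 0 1) x * h (fst x / norm x, fst (snd x) / norm x) \<partial>(lborel :: quat measure)) = (\<integral>\<^sup>+ x. F x \<partial>lborel)"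
    by (intro nn_integral_cong) (auto simp: F_def dist_norm split: split_indicator)
  also have "\<dots> = (\<integral>\<^sup>+ u. (\<integral>\<^sup>+ v. F (fst u, snd u, v) \<partial>lborel) \<partial>lborel)"
    by (rule split4) simp
  also have "\<dots> = (\<integral>\<^sup>+ u. ennreal pi * (\<integral>\<^sup>+ t. indicator {0..} t * \<phi> u t \<partial>lborel) \<partial>lborel)"
  proof (intro nn_integral_cong)
    fix u :: "real \<times> real"
    have "F (fst u, snd u, v) = \<phi> u (norm v ^ 2)" for v :: "real \<times> real"
    proof -
      have n: "norm (fst u, snd u, v) = sqrt (norm u ^ 2 + norm v ^ 2)"
        using norm_quat_sq[of "fst u" "snd u" v] norm_pair_sq[of u]
        by (metis norm_ge_zero real_sqrt_unique)
      have "norm (fst u, snd u, v) < 1 \<longleftrightarrow> norm u ^ 2 + norm v ^ 2 < 1"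
        unfolding n by (simp add: real_sqrt_lt_1_iff)
      then show ?thesis unfolding F_def \<phi>_def n by simp
    qed
    then show "(\<integral>\<^sup>+ v. F (fst u, snd u, v) \<partial>lborel) = ennreal pi * (\<integral>\<^sup>+ t. indicator {0..} t * \<phi> u t \<partial>lborel)"
      using radial[OF \<phi>m[of u]] by simp
  qed
  also have "\<dots> = (\<integral>\<^sup>+ u. ennreal pi * (\<integral>\<^sup>+ w. \<Psi> u w \<partial>lborel) \<partial>lborel)"
    by (simp add: inner_eq)
  also have "\<dots> = ennreal pi * (\<integral>\<^sup>+ u. (\<integral>\<^sup>+ w. \<Psi> u w \<partial>lborel) \<partial>lborel)"
    using lborel.borel_measurable_nn_integral_fst[OF \<Psi>m] by (intro nn_integral_cmult) simp
  also have "(\<integral>\<^sup>+ u. (\<integral>\<^sup>+ w. \<Psi> u w \<partial>lborel) \<partial>lborel) = (\<integral>\<^sup>+ w. (\<integral>\<^sup>+ u. \<Psi> u w \<partial>lborel) \<partial>lborel)"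
    by (rule lborel_pair.Fubini'[OF \<Psi>m, symmetric])
  also have "(\<integral>\<^sup>+ w. (\<integral>\<^sup>+ u. \<Psi> u w \<partial>lborel) \<partial>lborel) = (\<integral>\<^sup>+ w. ennreal w * indicator {0<..<1} w * K \<partial>lborel)"
  proof (rule nn_integral_cong_AE)
    show "AE w in lborel. (\<integral>\<^sup>+ u. \<Psi> u w \<partial>lborel) = ennreal w * indicator {0<..<1} w * K"
      using AE_lborel_singleton[of 0]
    proof eventually_elim
      case (elim w)
      show ?case
      proof (cases "0 < w \<and> w < 1")
        case True
        have "(\<integral>\<^sup>+ u. \<Psi> u w \<partial>lborel) = ennreal (sqrt w ^ 2) * (\<integral>\<^sup>+ z. \<Psi> (sqrt w *\<^sub>R z) w \<partial>lborel)"
          using True by (intro scale2) auto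
        also have "(\<integral>\<^sup>+ z. \<Psi> (sqrt w *\<^sub>R z) w \<partial>lborel) = K"
          unfolding K_def
        proof (intro nn_integral_cong)
          fix z :: "real \<times> real"
          have "norm (sqrt w *\<^sub>R z) ^ 2 = w * norm z ^ 2" using True by (simp add: power_mult_distrib)
          moreover have "w * norm z ^ 2 \<le> w \<longleftrightarrow> norm z \<le> 1" using True by (simp add: power_le_one_iff)
          ultimately show "\<Psi> (sqrt w *\<^sub>R z) w = indicator (cball 0 1) z * h z"
            using True by (cases z) (auto simp: \<Psi>_def split: split_indicator)
        qed
        finally show ?thesis using True by simp
      next
        case False
        have "\<Psi> u w = 0" for u
        proof -
          have "\<not> (norm u ^ 2 \<le> w \<and> w < 1)"
          proof
            assume a: "norm u ^ 2 \<le> w \<and> w < 1"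
            then have "0 \<le> w" using zero_le_power2[of "norm u"] by linarith
            then show False using a False elim by auto
          qed
          then show ?thesis unfolding \<Psi>_def by auto
        qed
        then show ?thesis using False by simp
      qed
    qed
  qed
  also have "(\<integral>\<^sup>+ w. ennreal w * indicator {0<..<1} w * K \<partial>lborel) = (\<integral>\<^sup>+ w. ennreal w * indicator {0<..<1} w \<partial>lborel) * K"
    by (rule nn_integral_multc) measurable
  also have "(\<integral>\<^sup>+ w. ennreal w * indicator {0<..<1} w \<partial>lborel) * K = ennreal (1/2) * K" by (simp add: int_id_01)
  also have "ennreal pi * (ennreal (1/2) * K) = ennreal (pi/2) * K"
  proof -
    have "ennreal pi * ennreal (1/2) = ennreal (pi/2)" by (subst ennreal_mult[symmetric]) auto
    then show ?thesis by (metis mult.assoc)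
  qed
  finally show ?thesis unfolding K_def[symmetric] .
qed

lemma hdk_meas[measurable]: "(\<lambda>z::real\<times>real. ennreal (hdk (fst z) (snd z))) \<in> borel_measurable borel"
  unfolding hdk_def by measurable

lemma hdk_nonneg: "a^2 + b^2 \<le> 1 \<Longrightarrow> 0 \<le> hdk a b"
proof -
  assume ab: "a^2 + b^2 \<le> 1"
  have "b^2 \<le> 1" using ab by (smt (verit) zero_le_power2)
  then have b1: "-1 \<le> b" "b \<le> 1" by (auto simp: abs_square_le_1 abs_le_iff)
  have "18 - 18 * b - 8 * a^2 \<le> 36" using b1 zero_le_power2[of a] by linarith
  moreover have "0 \<le> 18 - 18 * b - 8 * a^2"
  proof -
    have e: "18 - 18 * b - 8 * a^2 = (1 - b) * (10 - 8 * b) + 8 * (1 - b^2 - a^2)"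
      by (simp add: power2_eq_square algebra_simps)
    have "0 \<le> (1 - b) * (10 - 8 * b)" using b1 by simp
    moreover have "0 \<le> 8 * (1 - b^2 - a^2)" using ab by simp
    ultimately show ?thesis unfolding e by simp
  qed
  ultimately have "ln (18 - 18 * b - 8 * a^2) \<le> ln 36"
    by (cases "18 - 18 * b - 8 * a^2 = 0") auto
  moreover have "ln (36::real) = 2 * ln 6" using ln_mult[of 6 6] by simp
  ultimately show ?thesis unfolding hdk_def by simp
qed

lemma cball_iff: "\<bar>a\<bar> \<le> 1 \<Longrightarrow> (a, b) \<in> cball (0::real\<times>real) 1 \<longleftrightarrow> b \<in> {- sqrt (1 - a^2) .. sqrt (1 - a^2)}"
proof -
  assume a: "\<bar>a\<bar> \<le> 1"
  have "(a, b) \<in> cball (0::real\<times>real) 1 \<longleftrightarrow> a^2 + b^2 \<le> 1"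
    by (simp add: dist_norm norm_Pair real_sqrt_le_1_iff)
  also have "\<dots> \<longleftrightarrow> b^2 \<le> 1 - a^2" by auto
  also have "\<dots> \<longleftrightarrow> \<bar>b\<bar> \<le> sqrt (1 - a^2)"
  proof
    assume "b^2 \<le> 1 - a^2"
    then have "(\<bar>b\<bar>)^2 \<le> 1 - a^2" by simp
    then show "\<bar>b\<bar> \<le> sqrt (1 - a^2)" by (rule real_le_rsqrt)
  next
    assume h: "\<bar>b\<bar> \<le> sqrt (1 - a^2)"
    have "0 \<le> 1 - a^2" using a by (simp add: abs_square_le_1)
    have "(\<bar>b\<bar>)^2 \<le> (sqrt (1 - a^2))^2" using h by (intro power_mono) auto
    then show "b^2 \<le> 1 - a^2" using \<open>0 \<le> 1 - a^2\<close> by simp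
  qed
  finally show ?thesis by (auto simp: abs_le_iff)
qed

lemma innr_nonneg: "\<bar>a\<bar> \<le> 1 \<Longrightarrow> 0 \<le> innr a"
proof -
  assume a: "\<bar>a\<bar> \<le> 1"
  show ?thesis
  proof (rule has_integral_nonneg[OF innr_b[OF a]])
    fix b assume "b \<in> {- sqrt (1 - a^2) .. sqrt (1 - a^2)}"
    then have "(a, b) \<in> cball (0::real\<times>real) 1" using cball_iff[OF a] by simp
    then have "a^2 + b^2 \<le> 1" by (simp add: dist_norm norm_Pair real_sqrt_le_1_iff)
    then show "0 \<le> hdk a b" by (rule hdk_nonneg)
  qed
qed

lemma disk: "(\<integral>\<^sup>+ z. indicator (cball 0 1) z * ennreal (hdk (fst z) (snd z)) \<partial>(lborel :: (real\<times>real) measure))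
   = ennreal (pi * (ln 3 - 9/16))"
proof -
  have m: "(\<lambda>z::real\<times>real. indicator (cball 0 1) z * ennreal (hdk (fst z) (snd z))) \<in> borel_measurable borel"
    using hdk_meas by (intro borel_measurable_times_ennreal borel_measurable_indicator) auto
  have "(\<integral>\<^sup>+ z. indicator (cball 0 1) z * ennreal (hdk (fst z) (snd z)) \<partial>(lborel :: (real\<times>real) measure))
     = (\<integral>\<^sup>+ a. (\<integral>\<^sup>+ b. indicator (cball 0 1) (a, b) * ennreal (hdk a b) \<partial>lborel) \<partial>lborel)"
  proof -
    have "(\<integral>\<^sup>+ z. indicator (cball 0 1) z * ennreal (hdk (fst z) (snd z)) \<partial>(lborel :: (real\<times>real) measure))
       = integral\<^sup>N (lborel \<Otimes>\<^sub>M lborel) (\<lambda>z::real\<times>real. indicator (cball 0 1) z * ennreal (hdk (fst z) (snd z)))"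
      by (simp add: lborel_prod)
    also have "\<dots> = (\<integral>\<^sup>+ a. (\<integral>\<^sup>+ b. indicator (cball 0 1) (a, b) * ennreal (hdk a b) \<partial>lborel) \<partial>lborel)"
      by (subst lborel.nn_integral_fst[symmetric]) (use m in \<open>simp_all add: lborel_prod\<close>)
    finally show ?thesis .
  qed
  also have "\<dots> = (\<integral>\<^sup>+ a. ennreal (innr a) * indicator {-1..1} a \<partial>lborel)"
  proof (intro nn_integral_cong)
    fix a :: real
    show "(\<integral>\<^sup>+ b. indicator (cball 0 1) (a, b) * ennreal (hdk a b) \<partial>lborel) = ennreal (innr a) * indicator {-1..1} a"
    proof (cases "\<bar>a\<bar> \<le> 1")
      case True
      have "(\<integral>\<^sup>+ b. indicator (cball 0 1) (a, b) * ennreal (hdk a b) \<partial>lborel)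
          = (\<integral>\<^sup>+ b. ennreal (hdk a b) * indicator {- sqrt (1 - a^2) .. sqrt (1 - a^2)} b \<partial>lborel)"
      proof (intro nn_integral_cong)
        fix b :: real
        have "indicator (cball (0::real\<times>real) 1) (a, b) = (indicator {- sqrt (1 - a^2) .. sqrt (1 - a^2)} b :: ennreal)"
          unfolding indicator_def using cball_iff[OF True, of b] by presburger
        then show "indicator (cball 0 1) (a, b) * ennreal (hdk a b) = ennreal (hdk a b) * indicator {- sqrt (1 - a^2) .. sqrt (1 - a^2)} b"
          by (simp add: mult.commute)
      qed
      also have "\<dots> = ennreal (innr a)"
      proof (rule nn_integral_has_integral_lebesgue'[OF _ innr_b[OF True]])
        fix b assume "b \<in> {- sqrt (1 - a^2) .. sqrt (1 - a^2)}"
        then have "(a, b) \<in> cball (0::real\<times>real) 1" using cball_iff[OF True] by simp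
        then have "a^2 + b^2 \<le> 1" by (simp add: dist_norm norm_Pair real_sqrt_le_1_iff)
        then show "0 \<le> hdk a b" by (rule hdk_nonneg)
      qed
      finally show ?thesis using True by (simp add: abs_le_iff)
    next
      case False
      have "(a, b) \<notin> cball (0::real\<times>real) 1" for b
      proof
        assume "(a, b) \<in> cball (0::real\<times>real) 1"
        then have "a^2 + b^2 \<le> 1" by (simp add: dist_norm norm_Pair real_sqrt_le_1_iff)
        then have "a^2 \<le> 1" by (smt (verit) zero_le_power2)
        then show False using False by (simp add: abs_square_le_1)
      qed
      moreover have "a \<notin> {-1..1}" using False by auto
      ultimately show ?thesis by simp
    qed
  qed
  also have "\<dots> = ennreal (pi * (ln 3 - 9/16))"
    by (rule nn_integral_has_integral_lebesgue'[OF _ innr_total]) (auto intro: innr_nonneg)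
  finally show ?thesis .
qed

lemma qeval_Pq: "qeval [- qreal 2, - 3 *\<^sub>R qi, qone] x = (fst x^2 - fst (snd x)^2 - fst (snd (snd x))^2 - snd (snd (snd x))^2 + 3 * fst (snd x) - 2,
   2 * fst x * fst (snd x) - 3 * fst x, 2 * fst x * fst (snd (snd x)) - 3 * snd (snd (snd x)),
   2 * fst x * snd (snd (snd x)) + 3 * fst (snd (snd x)))"
proof -
  obtain a b c d where x: "x = (a, b, c, d)" by (cases x) auto
  show ?thesis unfolding x qeval_P by simp
qed

lemma nP_meas[measurable]: "(\<lambda>y. norm (qeval [- qreal 2, - 3 *\<^sub>R qi, qone] y)) \<in> borel_measurable borel"
  unfolding qeval_Pq by (intro borel_measurable_continuous_onI continuous_intros)

definition Hq :: "quat \<Rightarrow> real" where "Hq y = ln 6 - ln (norm (qeval [- qreal 2, - 3 *\<^sub>R qi, qone] y))"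

lemma Hq_meas[measurable]: "Hq \<in> borel_measurable borel"
  unfolding Hq_def by measurable

lemma Hq_unit: "norm y = 1 \<Longrightarrow> Hq y = hdk (fst y) (fst (snd y))"
proof -
  assume n: "norm y = 1"
  obtain a b c d where y: "y = (a, b, c, d)" by (cases y) auto
  have s: "a^2 + b^2 + c^2 + d^2 = 1" using n unfolding y norm_quat by simp
  have e: "(norm (qeval [- qreal 2, - 3 *\<^sub>R qi, qone] (a, b, c, d)))^2 = 18 - 18 * b - 8 * a^2" by (rule normsq_P[OF s])
  define X where "X = 18 - 18 * b - 8 * a^2"
  have X0: "0 \<le> X" unfolding X_def using e[symmetric] by simp
  have "norm (qeval [- qreal 2, - 3 *\<^sub>R qi, qone] (a, b, c, d)) = sqrt X" unfolding X_def using e[symmetric]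
    by (simp add: real_sqrt_unique)
  moreover have "ln (sqrt X) = ln X / 2"
    using X0 by (cases "X = 0") (auto simp: ln_sqrt)
  ultimately show ?thesis unfolding Hq_def hdk_def y X_def by simp
qed

lemma Hq_proj_nonneg: "0 \<le> Hq (x /\<^sub>R norm x)"
proof (cases "x = 0")
  case True
  have "qeval [- qreal 2, - 3 *\<^sub>R qi, qone] 0 = (-2, 0, 0, 0)"
    unfolding zero_prod_def qeval_P by simp
  then show ?thesis using True by (simp add: Hq_def norm_quat)
next
  case False
  let ?y = "x /\<^sub>R norm x"
  have n: "norm ?y = 1" using False by simp
  obtain a b c d where y: "?y = (a, b, c, d)" by (cases ?y) auto
  have s: "a^2 + b^2 + c^2 + d^2 = 1" using n unfolding y norm_quat by simp
  then have "a^2 + b^2 \<le> 1" by (smt (verit) zero_le_power2)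
  then have "0 \<le> hdk a b" by (rule hdk_nonneg)
  then show ?thesis using Hq_unit[OF n] y by simp
qed

lemma ln3_bound: "9/16 \<le> ln (3::real)"
proof -
  have "ln (1/3::real) \<le> 1/3 - 1" by (rule ln_le_minus_one) simp
  moreover have "ln (1/3::real) = - ln 3" by (simp add: ln_div)
  ultimately show ?thesis by simp
qed

lemma vol_ball4: "emeasure lborel (ball (0::quat) 1) = ennreal (pi^2/2)"
  using emeasure_ball[of 1 "0::quat"] by (simp add: unit_ball_vol_4)

lemma nn_Hq: "(\<integral>\<^sup>+ y. ennreal (Hq y) \<partial>haar_S3) = ennreal (ln 3 - 9/16)"
proof -
  let ?B = "ball (0::quat) 1"
  let ?V = "emeasure lborel ?B"
  have pm[measurable]: "(\<lambda>x::quat. x /\<^sub>R norm x) \<in> borel \<rightarrow>\<^sub>M borel" by measurable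
  have hm[measurable]: "(\<lambda>x::quat. ennreal (Hq (x /\<^sub>R norm x))) \<in> borel \<rightarrow>\<^sub>M borel"
    using measurable_comp[OF pm Hq_meas] by (simp add: comp_def)
  have bm[measurable]: "?B \<in> sets borel" by simp
  have "(\<integral>\<^sup>+ y. ennreal (Hq y) \<partial>haar_S3) = (\<integral>\<^sup>+ x. ennreal (Hq (x /\<^sub>R norm x)) \<partial>uniform_measure lborel ?B)"
    unfolding haar_S3_def by (subst nn_integral_distr) auto
  also have "\<dots> = (\<integral>\<^sup>+ x. (indicator ?B x / ?V) * ennreal (Hq (x /\<^sub>R norm x)) \<partial>lborel)"
    unfolding uniform_measure_def
    by (subst nn_integral_density) (auto intro!: borel_measurable_divide_ennreal borel_measurable_indicator)
  also have "\<dots> = (\<integral>\<^sup>+ x. indicator ?B x * ennreal (Hq (x /\<^sub>R norm x)) / ?V \<partial>lborel)"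
    by (intro nn_integral_cong) (simp add: ennreal_times_divide mult.commute)
  also have "\<dots> = (\<integral>\<^sup>+ x. indicator ?B x * ennreal (Hq (x /\<^sub>R norm x)) \<partial>lborel) / ?V"
    by (rule nn_integral_divide) measurable
  also have "(\<integral>\<^sup>+ x. indicator ?B x * ennreal (Hq (x /\<^sub>R norm x)) \<partial>lborel)
      = (\<integral>\<^sup>+ x. indicator ?B x * (\<lambda>z. ennreal (hdk (fst z) (snd z))) (fst x / norm x, fst (snd x) / norm x) \<partial>lborel)"
  proof (rule nn_integral_cong_AE)
    show "AE x in lborel. indicator ?B x * ennreal (Hq (x /\<^sub>R norm x)) = indicator ?B x * (\<lambda>z. ennreal (hdk (fst z) (snd z))) (fst x / norm x, fst (snd x) / norm x)"
      using AE_lborel_singleton[of "0::quat"]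
    proof eventually_elim
      case (elim x)
      have n: "norm (x /\<^sub>R norm x) = 1" using elim by simp
      have "Hq (x /\<^sub>R norm x) = hdk (fst x / norm x) (fst (snd x) / norm x)"
        using Hq_unit[OF n] by (simp add: divide_inverse mult.commute)
      then show ?case by simp
    qed
  qed
  also have "\<dots> = ennreal (pi/2) * (\<integral>\<^sup>+ z. indicator (cball 0 1) z * ennreal (hdk (fst z) (snd z)) \<partial>lborel)"
    by (rule reduction) (rule hdk_meas)
  also have "\<dots> = ennreal (pi/2) * ennreal (pi * (ln 3 - 9/16))" by (simp add: disk)
  finally have "(\<integral>\<^sup>+ y. ennreal (Hq y) \<partial>haar_S3) = ennreal (pi/2) * ennreal (pi * (ln 3 - 9/16)) / ennreal (pi^2/2)"
    by (simp add: vol_ball4)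
  also have "\<dots> = ennreal (ln 3 - 9/16)"
  proof -
    have L: "0 \<le> ln 3 - (9/16::real)" using ln3_bound by simp
    have "ennreal (pi/2) * ennreal (pi * (ln 3 - 9/16)) = ennreal (pi/2 * (pi * (ln 3 - 9/16)))"
      using L by (subst ennreal_mult) auto
    also have "\<dots> / ennreal (pi^2/2) = ennreal (pi/2 * (pi * (ln 3 - 9/16)) / (pi^2/2))"
      using L by (subst divide_ennreal) auto
    also have "pi/2 * (pi * (ln 3 - 9/16)) / (pi^2/2) = ln 3 - 9/16"
      by (simp add: field_simps power2_eq_square)
    finally show ?thesis by simp
  qed
  finally show ?thesis .
qed

lemma mH_P: "mH [- qreal 2, - 3 *\<^sub>R qi, qone] = 9 / 16 + ln 2"
proof -
  let ?B = "ball (0::quat) 1"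
  have pm[measurable]: "(\<lambda>x::quat. x /\<^sub>R norm x) \<in> borel \<rightarrow>\<^sub>M borel" by measurable
  have sp: "space haar_S3 = UNIV" by (simp add: haar_S3_def)
  have V: "emeasure lborel ?B = ennreal (pi^2/2)" by (rule vol_ball4)
  have e1: "emeasure haar_S3 UNIV = 1"
  proof -
    have "emeasure haar_S3 UNIV = emeasure (uniform_measure lborel ?B) UNIV"
      unfolding haar_S3_def by (subst emeasure_distr) auto
    also have "\<dots> = emeasure lborel ?B / emeasure lborel ?B"
      by (subst emeasure_uniform_measure) auto
    also have "\<dots> = 1" unfolding V by (rule ennreal_divide_self) auto
    finally show ?thesis .
  qed
  have fm: "finite_measure haar_S3" by (rule finite_measureI) (simp add: sp e1)
  have ms: "measure haar_S3 UNIV = 1" using e1 by (simp add: measure_def)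
  have Hm: "Hq \<in> borel_measurable haar_S3" unfolding haar_S3_def using Hq_meas by simp
  have AEn: "AE y in haar_S3. 0 \<le> Hq y"
    unfolding haar_S3_def by (subst AE_distr_iff) (auto intro!: AE_I2 Hq_proj_nonneg)
  have L: "0 \<le> ln 3 - (9/16::real)" using ln3_bound by simp
  have iH: "integrable haar_S3 Hq"
    by (rule integrableI_nonneg[OF Hm AEn]) (simp add: nn_Hq)
  have IH: "integral\<^sup>L haar_S3 Hq = ln 3 - 9/16"
    using integral_eq_nn_integral[OF Hm AEn] nn_Hq L by simp
  have "mH [- qreal 2, - 3 *\<^sub>R qi, qone] = integral\<^sup>L haar_S3 (\<lambda>y. ln 6 - Hq y)"
    unfolding mH_def Hq_def by simp
  also have "\<dots> = integral\<^sup>L haar_S3 (\<lambda>y. ln 6) - integral\<^sup>L haar_S3 Hq"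
    by (rule Bochner_Integration.integral_diff[OF finite_measure.integrable_const[OF fm] iH])
  also have "\<dots> = ln 6 - (ln 3 - 9/16)" using IH sp ms by simp
  also have "\<dots> = 9/16 + ln 2"
  proof -
    have "ln (6::real) = ln 2 + ln 3" using ln_mult[of 2 3] by simp
    then show ?thesis by simp
  qed
  finally show ?thesis .
qed

theorem proposition5p5:
  shows "qstar [- qi, qone] [- 2 *\<^sub>R qi, qone] = [- qreal 2, - 3 *\<^sub>R qi, qone]
     \<and> mH (qstar [- qi, qone] [- 2 *\<^sub>R qi, qone]) = 9 / 16 + ln 2
     \<and> mH [- qreal 2, - 3 *\<^sub>R qi, qone] = 9 / 16 + ln 2"
  using qstar_eq mH_P by simp

end
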